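(* Let $P$ be a finite poset and $\mathcal{J}\subseteq\mathrm{Hom}(P,\mathbb{N})$ a poset ideal with complement filter $\mathcal{J}^c$. The set of monomials in $L^p(\mathcal{J},P)$ is precisely $\{\overline{\Lambda}\phi:\phi\in\mathcal{J}^c\}$. Equivalently, the monomials of $k[x_P]$ not in $L^p(\mathcal{J},P)$ are precisely the $\overline{\Lambda}\phi$ for $\phi\in\mathcal{J}$.
   Context: $\mathbb{N}=\{0,1,\dots\}$; $\mathrm{Hom}(P,\mathbb{N})$ is the set of isotone maps $P\to\mathbb{N}$ ordered pointwise. The ascent is $\Lambda\phi=\{(p,i)\in P\times\mathbb{N}:\phi(q)\le i<\phi(p)\ \forall q<p\}$ and $\overline{\Lambda}\phi=\prod_{(p,i)\in\Lambda\phi}x_p\in k[x_P]$, $k$ a field. The letterplace ideal $L(\mathcal{J},P)\subseteq k[x_{P\times\mathbb{N}}]$ is generated by the monomials $\prod_{(p,i)\in\Lambda\phi}x_{p,i}$ for $\phi\in\mathcal{J}^c$, and $L^p(\mathcal{J},P)$ is the ideal of $k[x_P]$ generated by the images of these generators under $x_{p,i}\mapsto x_p$. *)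

theory Defs
  imports Main "HOL-Library.Poly_Mapping"
begin

type_synonym ('v, 'k) mpoly = "('v \<Rightarrow>\<^sub>0 nat) \<Rightarrow>\<^sub>0 'k"

definition Var :: "'v \<Rightarrow> ('v, 'k::comm_semiring_1) mpoly" where
  "Var v = Poly_Mapping.single (Poly_Mapping.single v 1) 1"

definition is_monomial :: "('v, 'k::comm_semiring_1) mpoly \<Rightarrow> bool" where
  "is_monomial f \<longleftrightarrow> (\<exists>e. f = Poly_Mapping.single e 1)"

definition ideal_gen :: "'a::comm_ring_1 set \<Rightarrow> 'a set" where
  "ideal_gen G = {f. \<exists>F c. finite F \<and> F \<subseteq> G \<and> f = (\<Sum>g\<in>F. c g * g)}"

definition Hom :: "('p::order \<Rightarrow> nat) set" where
  "Hom = {\<phi>. mono \<phi>}"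

definition poset_ideal :: "('p::order \<Rightarrow> nat) set \<Rightarrow> bool" where
  "poset_ideal J \<longleftrightarrow> J \<subseteq> Hom \<and> (\<forall>\<phi>\<in>J. \<forall>\<psi>\<in>Hom. \<psi> \<le> \<phi> \<longrightarrow> \<psi> \<in> J)"

definition ascent :: "('p::order \<Rightarrow> nat) \<Rightarrow> ('p \<times> nat) set" where
  "ascent \<phi> = {(p, i). (\<forall>q. q < p \<longrightarrow> \<phi> q \<le> i) \<and> i < \<phi> p}"

definition ascent_bar :: "('p::order \<Rightarrow> nat) \<Rightarrow> ('p, 'k::comm_ring_1) mpoly" where
  "ascent_bar \<phi> = (\<Prod>(p, i)\<in>ascent \<phi>. Var p)"

(* L^p(J,P): generated by the images of the letterplace generators prod_{(p,i) in ascent phi} x_{p,i}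
   (phi in J^c) under the ring map x_{p,i} |-> x_p, i.e. by prod_{(p,i) in ascent phi} x_p. *)
definition Lp :: "('p::order \<Rightarrow> nat) set \<Rightarrow> ('p, 'k::comm_ring_1) mpoly set" where
  "Lp J = ideal_gen {(\<Prod>(p, i)\<in>ascent \<phi>. Var p) | \<phi>. \<phi> \<in> Hom - J}"

end

theory Submission
  imports Defs
begin

definition mx :: "('p::{finite,order} \<Rightarrow> nat) \<Rightarrow> 'p \<Rightarrow> nat" where
  "mx \<phi> p = Max (insert 0 (\<phi> ` {q. q < p}))"

definition expo :: "('p::{finite,order} \<Rightarrow> nat) \<Rightarrow> 'p \<Rightarrow>\<^sub>0 nat" where
  "expo \<phi> = (\<Sum>(p, i)\<in>ascent \<phi>. Poly_Mapping.single p 1)"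

lemma lz:
  assumes "\<not>(\<exists>l. e = l + d)"
  shows "Poly_Mapping.lookup (c * Poly_Mapping.single d (1::'k::comm_semiring_1)) e = 0"
proof -
  have "\<And>a aa. (if e = a + aa then if d = aa then (1::'k) else 0 else 0) = 0" using assms by auto
  then show ?thesis by (simp add: lookup_mult lookup_single when_def)
qed

lemma mx_le_iff: "mx \<phi> p \<le> i \<longleftrightarrow> (\<forall>q. q < p \<longrightarrow> \<phi> q \<le> i)"
  unfolding mx_def by auto

lemma ascent_iff: "(p, i) \<in> ascent \<phi> \<longleftrightarrow> mx \<phi> p \<le> i \<and> i < \<phi> p"
  unfolding ascent_def mx_le_iff by auto

lemma finite_ascent: "finite (ascent (\<phi> :: 'p::{finite,order} \<Rightarrow> nat))"
proof -
  have "ascent \<phi> \<subseteq> (\<Union>p. {p} \<times> {..<\<phi> p})"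
    unfolding ascent_def by auto
  moreover have "finite (\<Union>p. {p} \<times> {..<\<phi> p})" by auto
  ultimately show ?thesis by (rule finite_subset)
qed

lemma lookup_expo: "Poly_Mapping.lookup (expo \<phi>) p = \<phi> p - mx \<phi> p"
proof -
  have "Poly_Mapping.lookup (expo \<phi>) p = (\<Sum>x\<in>ascent \<phi>. if fst x = p then 1 else 0)"
    unfolding expo_def lookup_sum
    by (rule sum.cong) (auto simp: lookup_single when_def)
  also have "\<dots> = card {x\<in>ascent \<phi>. fst x = p}"
    using finite_ascent[of \<phi>] by (simp add: sum.inter_filter[symmetric])
  also have "{x\<in>ascent \<phi>. fst x = p} = Pair p ` {mx \<phi> p..<\<phi> p}"
    by (auto simp: ascent_iff)
  also have "card \<dots> = \<phi> p - mx \<phi> p"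
    by (simp add: card_image inj_on_def)
  finally show ?thesis .
qed

lemma prod_single:
  "finite A \<Longrightarrow> (\<Prod>x\<in>A. Poly_Mapping.single (g x) (1::'k::comm_semiring_1)) = Poly_Mapping.single (\<Sum>x\<in>A. g x) 1"
  by (induction A rule: finite_induct) (auto simp: mult_single)

lemma ascent_bar_eq: "(ascent_bar \<phi> :: ('p::{finite,order}, 'k::comm_ring_1) mpoly) = Poly_Mapping.single (expo \<phi>) 1"
proof -
  have "(ascent_bar \<phi> :: ('p, 'k) mpoly) = (\<Prod>x\<in>ascent \<phi>. Poly_Mapping.single ((\<lambda>(p,i). Poly_Mapping.single p 1) x) 1)"
    unfolding ascent_bar_def by (rule prod.cong) (auto simp: Var_def)
  also have "\<dots> = Poly_Mapping.single (expo \<phi>) 1"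
    unfolding expo_def by (rule prod_single[OF finite_ascent])
  finally show ?thesis .
qed

lemma mx_le: "mono \<phi> \<Longrightarrow> mx \<phi> p \<le> \<phi> p"
  unfolding mx_le_iff by (auto simp: mono_def)

definition ht :: "'p::{finite,order} \<Rightarrow> nat" where
  "ht p = card {q. q < p}"

lemma ht_less: "q < p \<Longrightarrow> ht q < ht (p::'p::{finite,order})"
  unfolding ht_def
  by (rule psubset_card_mono) (auto dest: order.strict_trans)

lemma expo_le:
  assumes "mono \<psi>" "mono \<phi>" "\<And>p. Poly_Mapping.lookup (expo \<psi>) p \<le> Poly_Mapping.lookup (expo \<phi>) p"
  shows "\<psi> p \<le> (\<phi> p :: nat)"
proof (induction p rule: measure_induct_rule[where f = ht])
  case (less p)
  have "mx \<psi> p \<le> mx \<phi> p"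
    unfolding mx_le_iff
  proof (intro allI impI)
    fix q assume "q < p"
    then have "\<psi> q \<le> \<phi> q" using less ht_less by blast
    also have "\<phi> q \<le> mx \<phi> p" using \<open>q < p\<close> mx_le_iff[of \<phi> p "mx \<phi> p"] by auto
    finally show "\<psi> q \<le> mx \<phi> p" .
  qed
  moreover have "\<psi> p - mx \<psi> p \<le> \<phi> p - mx \<phi> p"
    using assms(3)[of p] by (simp add: lookup_expo)
  ultimately show ?case using mx_le[OF assms(1), of p] mx_le[OF assms(2), of p] by linarith
qed

lemma surj_expo:
  fixes e :: "'p::{finite,order} \<Rightarrow>\<^sub>0 nat"
  shows "\<exists>\<phi>. \<phi> \<in> Hom \<and> expo \<phi> = e"
proof -
  define R :: "('p \<times> 'p) set" where "R = {(q, p). q < p}"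
  have wfR: "wf R"
    by (rule wf_subset[OF wf_measure[of ht]]) (auto simp: R_def ht_less)
  define F where "F = (\<lambda>(g :: 'p \<Rightarrow> nat) p. Poly_Mapping.lookup e p + Max (insert 0 (g ` {q. q < p})))"
  define \<phi> where "\<phi> = wfrec R F"
  have rec: "\<phi> p = Poly_Mapping.lookup e p + mx \<phi> p" for p
  proof -
    have "\<phi> p = F (cut \<phi> R p) p" unfolding \<phi>_def by (rule wfrec[OF wfR])
    also have "cut \<phi> R p ` {q. q < p} = \<phi> ` {q. q < p}"
      by (rule image_cong) (auto simp: cut_apply R_def)
    then have "F (cut \<phi> R p) p = Poly_Mapping.lookup e p + mx \<phi> p"
      by (simp add: F_def mx_def)
    finally show ?thesis .
  qed
  have "mono \<phi>"
  proof (rule monoI)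
    fix q p :: 'p assume "q \<le> p"
    show "\<phi> q \<le> \<phi> p"
    proof (cases "q = p")
      case False
      with \<open>q \<le> p\<close> have "q < p" by auto
      then have "\<phi> q \<le> mx \<phi> p" using mx_le_iff[of \<phi> p "mx \<phi> p"] by auto
      then show ?thesis using rec[of p] by linarith
    qed simp
  qed
  moreover have "expo \<phi> = e"
    by (rule poly_mapping_eqI) (simp add: lookup_expo rec[symmetric] | subst rec, simp)+
  ultimately show ?thesis by (auto simp: Hom_def)
qed

lemma mono_ideal:
  assumes "Poly_Mapping.single e 1 \<in> (Lp J :: ('p::{finite,order}, 'k::field) mpoly set)"
  shows "\<exists>\<psi>\<in>Hom - J. \<forall>p. Poly_Mapping.lookup (expo \<psi>) p \<le> Poly_Mapping.lookup e p"
proof (rule ccontr)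
  assume nz: "\<not> ?thesis"
  obtain F c where F: "finite F" "F \<subseteq> {(\<Prod>(p, i)\<in>ascent \<phi>. Var p) | \<phi>. \<phi> \<in> Hom - J}"
    and eq: "(Poly_Mapping.single e 1 :: ('p, 'k) mpoly) = (\<Sum>g\<in>F. c g * g)"
    using assms unfolding Lp_def ideal_gen_def by blast
  have "Poly_Mapping.lookup (c g * g) e = 0" if "g \<in> F" for g
  proof -
    obtain \<psi> where \<psi>: "\<psi> \<in> Hom - J" "g = ascent_bar \<psi>"
      using F(2) \<open>g \<in> F\<close> unfolding ascent_bar_def by blast
    then obtain p where p: "Poly_Mapping.lookup e p < Poly_Mapping.lookup (expo \<psi>) p" using nz by (meson not_le)
    have "\<not>(\<exists>l. e = l + expo \<psi>)"
    proof
      assume "\<exists>l. e = l + expo \<psi>"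
      then obtain l where "e = l + expo \<psi>" by blast
      then have "Poly_Mapping.lookup e p = Poly_Mapping.lookup l p + Poly_Mapping.lookup (expo \<psi>) p" by (simp add: lookup_add)
      with p show False by linarith
    qed
    then show ?thesis using \<psi> by (simp add: ascent_bar_eq lz)
  qed
  then have "Poly_Mapping.lookup (\<Sum>g\<in>F. c g * g) e = 0" by (simp add: lookup_sum)
  moreover have L2: "Poly_Mapping.lookup (Poly_Mapping.single e (1::'k)) e = 1" by simp
  ultimately have "(0::'k) = 1" unfolding eq by simp
  then show False by simp
qed

theorem corollary3p6:
  fixes J :: "('p::{finite, order} \<Rightarrow> nat) set"
  assumes "poset_ideal J"
  shows "{f :: ('p, 'k::field) mpoly. is_monomial f \<and> f \<in> Lp J} = {ascent_bar \<phi> | \<phi>. \<phi> \<in> Hom - J} \<and>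
         {f :: ('p, 'k::field) mpoly. is_monomial f \<and> f \<notin> Lp J} = {ascent_bar \<phi> | \<phi>. \<phi> \<in> J}"
proof -
  have JH: "J \<subseteq> Hom" and down: "\<And>\<phi> \<psi>. \<phi> \<in> J \<Longrightarrow> \<psi> \<in> Hom \<Longrightarrow> \<psi> \<le> \<phi> \<Longrightarrow> \<psi> \<in> J"
    using assms unfolding poset_ideal_def by blast+
  have gen: "(ascent_bar \<phi> :: ('p, 'k) mpoly) \<in> Lp J" if "\<phi> \<in> Hom - J" for \<phi>
  proof -
    have f1: "finite {ascent_bar \<phi> :: ('p, 'k) mpoly}" by simp
    have f2: "{ascent_bar \<phi> :: ('p, 'k) mpoly} \<subseteq> {(\<Prod>(p, i)\<in>ascent \<phi>. Var p) | \<phi>. \<phi> \<in> Hom - J}"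
    proof (rule subsetI)
      fix g assume "g \<in> {ascent_bar \<phi> :: ('p, 'k) mpoly}"
      then have "g = (\<Prod>(p, i)\<in>ascent \<phi>. Var p)" by (simp add: ascent_bar_def)
      then show "g \<in> {(\<Prod>(p, i)\<in>ascent \<phi>. Var p) | \<phi>. \<phi> \<in> Hom - J}"
        using that by (intro CollectI exI[of _ \<phi>] conjI)
    qed
    have f3: "(ascent_bar \<phi> :: ('p, 'k) mpoly) = (\<Sum>g\<in>{ascent_bar \<phi>}. (\<lambda>_. 1) g * g)" by simp
    show ?thesis unfolding Lp_def ideal_gen_def
      by (intro CollectI exI[of _ "{ascent_bar \<phi> :: ('p, 'k) mpoly}"] exI[of _ "\<lambda>_. 1 :: ('p, 'k) mpoly"] conjI f1 f2 f3)
  qed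
  have notin: "(ascent_bar \<phi> :: ('p, 'k) mpoly) \<notin> Lp J" if pJ: "\<phi> \<in> J" for \<phi>
  proof
    assume "(ascent_bar \<phi> :: ('p, 'k) mpoly) \<in> Lp J"
    then have "Poly_Mapping.single (expo \<phi>) (1::'k) \<in> Lp J" by (simp only: ascent_bar_eq)
    from mono_ideal[OF this] obtain \<psi> where \<psi>: "\<psi> \<in> Hom - J"
      "\<forall>p. Poly_Mapping.lookup (expo \<psi>) p \<le> Poly_Mapping.lookup (expo \<phi>) p" by blast
    have m1: "mono \<psi>" using \<psi>(1) by (simp add: Hom_def)
    have m2: "mono \<phi>" using pJ JH by (auto simp: Hom_def)
    have "\<psi> \<le> \<phi>" unfolding le_fun_def
      using expo_le[OF m1 m2] \<psi>(2) by blast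
    then have "\<psi> \<in> J" using down[OF pJ] \<psi>(1) by blast
    then show False using \<psi>(1) by blast
  qed
  have mon: "is_monomial (ascent_bar \<phi> :: ('p, 'k) mpoly)" for \<phi>
    unfolding is_monomial_def ascent_bar_eq by (rule exI[of _ "expo \<phi>"]) (rule refl)
  have rep: "\<exists>\<phi>\<in>Hom. f = ascent_bar \<phi>" if fm: "is_monomial (f :: ('p, 'k) mpoly)" for f
  proof -
    obtain e where e: "f = Poly_Mapping.single e 1" using fm unfolding is_monomial_def by (elim exE)
    obtain \<phi> where \<phi>: "\<phi> \<in> Hom" "expo \<phi> = e" using surj_expo[of e] by (elim exE conjE)
    show ?thesis by (rule bexI[OF _ \<phi>(1)]) (simp only: e ascent_bar_eq \<phi>(2))
  qed
  have A: "{f :: ('p, 'k) mpoly. is_monomial f \<and> f \<in> Lp J} = {ascent_bar \<phi> | \<phi>. \<phi> \<in> Hom - J}"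
  proof (intro equalityI subsetI)
    fix f assume "f \<in> {f :: ('p, 'k) mpoly. is_monomial f \<and> f \<in> Lp J}"
    then have f: "is_monomial f" "f \<in> Lp J" by auto
    then obtain \<phi> where "\<phi> \<in> Hom" "f = ascent_bar \<phi>" using rep by blast
    moreover have "\<phi> \<notin> J" using notin f calculation by blast
    ultimately show "f \<in> {ascent_bar \<phi> | \<phi>. \<phi> \<in> Hom - J}" by blast
  next
    fix f assume "f \<in> {ascent_bar \<phi> :: ('p, 'k) mpoly | \<phi>. \<phi> \<in> Hom - J}"
    then obtain \<phi> where "\<phi> \<in> Hom - J" "f = ascent_bar \<phi>" by blast
    then show "f \<in> {f :: ('p, 'k) mpoly. is_monomial f \<and> f \<in> Lp J}" using gen mon by simp
  qed
  have B: "{f :: ('p, 'k) mpoly. is_monomial f \<and> f \<notin> Lp J} = {ascent_bar \<phi> | \<phi>. \<phi> \<in> J}"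
  proof (intro equalityI subsetI)
    fix f assume "f \<in> {f :: ('p, 'k) mpoly. is_monomial f \<and> f \<notin> Lp J}"
    then have f: "is_monomial f" "f \<notin> Lp J" by auto
    then obtain \<phi> where "\<phi> \<in> Hom" "f = ascent_bar \<phi>" using rep by blast
    moreover have "\<phi> \<in> J" using gen f calculation by blast
    ultimately show "f \<in> {ascent_bar \<phi> | \<phi>. \<phi> \<in> J}" by blast
  next
    fix f assume "f \<in> {ascent_bar \<phi> :: ('p, 'k) mpoly | \<phi>. \<phi> \<in> J}"
    then obtain \<phi> where "\<phi> \<in> J" "f = ascent_bar \<phi>" by blast
    then show "f \<in> {f :: ('p, 'k) mpoly. is_monomial f \<and> f \<notin> Lp J}" using notin mon by simp
  qed
  show ?thesis using A B by blast
qed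

end
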